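(* Let $P=(P_1,\dots,P_m):\mathbb{R}^n\to\mathbb{R}^m$ be a polynomial map with $P(0)=0$ and let $r\ge1$. The following are equivalent: (a) there exist $C,\varepsilon,\sigma>0$ such that $\mathscr{D}(\operatorname{grad}P_1(x),\dots,\operatorname{grad}P_m(x))\ge C|x|^{r-1}$ for all $x\in\mathscr{H}_{r}(P;\sigma)$ with $|x|<\varepsilon$; (b) there exist $q>0$, $\varepsilon>0$ such that $|P(x)|\cdot|y|+|(dP)^{*}(x)y|\cdot|x|\ge q|x|^{r}|y|$ for all $|x|<\varepsilon$ and all $y\in\mathbb{R}^m$.
   Context: $|\cdot|$ is the Euclidean norm; $(dP)^{*}(x)$ is the transpose of the Jacobian of $P$ at $x$. The horn-neighbourhood is $\mathscr{H}_{s}(F;\sigma)=\{x\in\mathbb{R}^{n}: |F(x)|<\sigma|x|^{s}\}$. For $v_1,\dots,v_m\in\mathbb{R}^n$, $\mathscr{D}(v_{1},\dots,v_{m})=\min_{i}\operatorname{dist}(v_{i},V_{i})$, where $V_{i}$ is the linear span of the $v_{j}$, $j\neq i$. *)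

theory Defs
  imports "HOL-Analysis.Analysis"
begin

definition horn :: "real \<Rightarrow> ('a::real_normed_vector \<Rightarrow> 'b::real_normed_vector) \<Rightarrow> real \<Rightarrow> 'a set" where
  "horn s F \<sigma> = {x. norm (F x) < \<sigma> * norm x powr s}"

definition Dmin :: "('m::finite \<Rightarrow> 'a::euclidean_space) \<Rightarrow> real" where
  "Dmin v = Min ((\<lambda>i. infdist (v i) (span (v ` (UNIV - {i})))) ` UNIV)"

definition grad_comp :: "(real^'n \<Rightarrow> real^'m) \<Rightarrow> 'm \<Rightarrow> real^'n \<Rightarrow> real^'n" where
  "grad_comp P i x = row i (jacobian P (at x))"

end

theory Submission
  imports Defs
begin

lemma transp_eq: "transpose (A::real^'n^'m) *v y = (\<Sum>i\<in>UNIV. y$i *\<^sub>R row i A)"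
  by (simp add: vec_eq_iff matrix_vector_mult_def transpose_def row_def sum_component mult.commute)

lemma L1k:
  fixes v :: "'m::finite \<Rightarrow> real^'n"
  shows "\<bar>y$k\<bar> * infdist (v k) (span (v ` (UNIV - {k}))) \<le> norm (\<Sum>i\<in>UNIV. y$i *\<^sub>R v i)"
proof (cases "y$k = 0")
  case True then show ?thesis by simp
next
  case False
  define w where "w = - (1 / y$k) *\<^sub>R (\<Sum>i\<in>UNIV - {k}. y$i *\<^sub>R v i)"
  have w: "w \<in> span (v ` (UNIV - {k}))"
    unfolding w_def by (intro span_mul span_sum span_base) auto
  have "(\<Sum>i\<in>UNIV. y$i *\<^sub>R v i) = y$k *\<^sub>R v k + (\<Sum>i\<in>UNIV - {k}. y$i *\<^sub>R v i)"
    by (simp add: sum.remove[of UNIV k])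
  also have "\<dots> = y$k *\<^sub>R (v k - w)"
    using False by (simp add: w_def algebra_simps)
  finally have "norm (\<Sum>i\<in>UNIV. y$i *\<^sub>R v i) = \<bar>y$k\<bar> * dist (v k) w"
    by (simp add: dist_norm)
  moreover have "infdist (v k) (span (v ` (UNIV - {k}))) \<le> dist (v k) w"
    using w by (rule infdist_le)
  ultimately show ?thesis by (simp add: mult_left_mono)
qed

lemma Dmin_nonneg: "0 \<le> Dmin v"
  unfolding Dmin_def by (subst Min_ge_iff) (auto simp: infdist_nonneg)

lemma Dmin_le: "Dmin v \<le> infdist (v k) (span (v ` (UNIV - {k})))"
  unfolding Dmin_def by (rule Min_le) auto

lemma L1:
  fixes v :: "'m::finite \<Rightarrow> real^'n"
  shows "Dmin v * norm y \<le> real CARD('m) * norm (\<Sum>i\<in>UNIV. y$i *\<^sub>R v i)"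
proof -
  have "Dmin v * norm y \<le> Dmin v * (\<Sum>k\<in>UNIV. \<bar>y$k\<bar>)"
    by (intro mult_left_mono norm_le_l1_cart Dmin_nonneg)
  also have "\<dots> = (\<Sum>k\<in>UNIV. \<bar>y$k\<bar> * Dmin v)" by (simp add: sum_distrib_left mult.commute)
  also have "\<dots> \<le> (\<Sum>k\<in>(UNIV::'m set). norm (\<Sum>i\<in>UNIV. y$i *\<^sub>R v i))"
  proof (rule sum_mono)
    fix k
    have "\<bar>y$k\<bar> * Dmin v \<le> \<bar>y$k\<bar> * infdist (v k) (span (v ` (UNIV - {k})))"
      by (intro mult_left_mono Dmin_le) auto
    then show "\<bar>y$k\<bar> * Dmin v \<le> norm (\<Sum>i\<in>UNIV. y$i *\<^sub>R v i)" using L1k[of y k v] by linarith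
  qed
  also have "\<dots> = real CARD('m) * norm (\<Sum>i\<in>UNIV. y$i *\<^sub>R v i)" by simp
  finally show ?thesis .
qed

lemma L2:
  fixes v :: "'m::finite \<Rightarrow> real^'n"
  assumes c: "\<And>y. c * norm y \<le> norm (\<Sum>i\<in>UNIV. y$i *\<^sub>R v i)" and c0: "c \<ge> 0"
  shows "c \<le> Dmin v"
  unfolding Dmin_def
proof (subst Min_ge_iff, simp, simp, clarify)
  fix k
  let ?T = "{w. \<exists>y. y$k = 0 \<and> w = (\<Sum>i\<in>UNIV. y$i *\<^sub>R v i)}"
  have sub: "subspace ?T"
    unfolding subspace_def
  proof (intro conjI allI impI ballI)
    show "0 \<in> ?T" by (rule CollectI, rule exI[of _ 0]) simp
  next
    fix a b assume "a \<in> ?T" "b \<in> ?T"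
    then obtain ya yb where "ya$k = 0" "a = (\<Sum>i\<in>UNIV. ya$i *\<^sub>R v i)" "yb$k = 0" "b = (\<Sum>i\<in>UNIV. yb$i *\<^sub>R v i)" by auto
    then show "a + b \<in> ?T" by (intro CollectI exI[of _ "ya + yb"]) (simp add: sum.distrib scaleR_add_left)
  next
    fix a and s :: real assume "a \<in> ?T"
    then obtain ya where "ya$k = 0" "a = (\<Sum>i\<in>UNIV. ya$i *\<^sub>R v i)" by auto
    then show "s *\<^sub>R a \<in> ?T" by (intro CollectI exI[of _ "s *\<^sub>R ya"]) (simp add: scaleR_sum_right)
  qed
  have "v ` (UNIV - {k}) \<subseteq> ?T"
  proof
    fix z assume "z \<in> v ` (UNIV - {k})"
    then obtain j where "j \<noteq> k" "z = v j" by auto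
    have "v j = (\<Sum>i\<in>UNIV. (axis j 1::real^'m)$i *\<^sub>R v i)"
      by (simp add: axis_def if_distrib[of "\<lambda>a. a *\<^sub>R b" for b] cong: if_cong)
    moreover have "(axis j 1::real^'m)$k = 0" using \<open>j \<noteq> k\<close> by (simp add: axis_def)
    ultimately show "z \<in> ?T" using \<open>z = v j\<close> by blast
  qed
  then have spT: "span (v ` (UNIV - {k})) \<subseteq> ?T" using sub by (rule span_minimal)
  have ne: "span (v ` (UNIV - {k})) \<noteq> {}" using span_zero by blast
  show "c \<le> infdist (v k) (span (v ` (UNIV - {k})))"
    unfolding infdist_notempty[OF ne]
  proof (rule cINF_greatest[OF ne])
    fix w assume "w \<in> span (v ` (UNIV - {k}))"
    with spT obtain y where y: "y$k = 0" "w = (\<Sum>i\<in>UNIV. y$i *\<^sub>R v i)" by auto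
    define z where "z = axis k 1 - y"
    have "v k - w = (\<Sum>i\<in>UNIV. z$i *\<^sub>R v i)"
      by (simp add: z_def y axis_def if_distrib[of "\<lambda>a. a *\<^sub>R b" for b] scaleR_diff_left sum_subtractf cong: if_cong)
    moreover have "1 \<le> norm z"
    proof -
      have "z$k = 1" by (simp add: z_def y)
      then show ?thesis using component_le_norm_cart[of z k] by simp
    qed
    ultimately have "c \<le> norm (v k - w)"
      using c[of z] c0 by (smt (verit) mult_left_mono mult_cancel_left1)
    then show "c \<le> dist (v k) w" by (simp add: dist_norm)
  qed
qed

theorem mainTheorem5:
  fixes P :: "real^'n \<Rightarrow> real^'m" and r :: real
  assumes "polynomial_function P" and "P 0 = 0" and "r \<ge> 1"
  shows "(\<exists>C \<epsilon> \<sigma>. C > 0 \<and> \<epsilon> > 0 \<and> \<sigma> > 0 \<and>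
            (\<forall>x \<in> horn r P \<sigma>. norm x < \<epsilon> \<longrightarrow>
               Dmin (\<lambda>i. grad_comp P i x) \<ge> C * norm x powr (r - 1)))
     \<longleftrightarrow>
         (\<exists>q \<epsilon>. q > 0 \<and> \<epsilon> > 0 \<and>
            (\<forall>x y. norm x < \<epsilon> \<longrightarrow>
               norm (P x) * norm y + norm (transpose (jacobian P (at x)) *v y) * norm x
                 \<ge> q * norm x powr r * norm y))"
proof
  assume "\<exists>C \<epsilon> \<sigma>. C > 0 \<and> \<epsilon> > 0 \<and> \<sigma> > 0 \<and>
            (\<forall>x \<in> horn r P \<sigma>. norm x < \<epsilon> \<longrightarrow>
               Dmin (\<lambda>i. grad_comp P i x) \<ge> C * norm x powr (r - 1))"
  then obtain C \<epsilon> \<sigma> where C: "C > 0" "\<epsilon> > 0" "\<sigma> > 0" and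
    H: "\<And>x. x \<in> horn r P \<sigma> \<Longrightarrow> norm x < \<epsilon> \<Longrightarrow> Dmin (\<lambda>i. grad_comp P i x) \<ge> C * norm x powr (r - 1)"
    by blast
  define q where "q = min \<sigma> (C / real CARD('m))"
  have q0: "q > 0" using C by (simp add: q_def)
  have "\<forall>x y. norm x < \<epsilon> \<longrightarrow>
               norm (P x) * norm y + norm (transpose (jacobian P (at x)) *v y) * norm x
                 \<ge> q * norm x powr r * norm y"
  proof (intro allI impI)
    fix x :: "real^'n" and y :: "real^'m" assume xe: "norm x < \<epsilon>"
    let ?J = "jacobian P (at x)"
    have n1: "0 \<le> norm (P x) * norm y" and n2: "0 \<le> norm (transpose ?J *v y) * norm x" by auto
    show "norm (P x) * norm y + norm (transpose ?J *v y) * norm x \<ge> q * norm x powr r * norm y"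
    proof (cases "x = 0")
      case True then show ?thesis using n1 n2 by simp
    next
      case False
      then have nx: "norm x > 0" by simp
      have pw: "norm x powr (r - 1) * norm x = norm x powr r"
        using nx by (simp add: powr_diff)
      show ?thesis
      proof (cases "x \<in> horn r P \<sigma>")
        case True
        have D: "Dmin (\<lambda>i. row i ?J) \<ge> C * norm x powr (r - 1)"
          using H[OF True xe] by (simp add: grad_comp_def)
        have L: "Dmin (\<lambda>i. row i ?J) * norm y \<le> real CARD('m) * norm (transpose ?J *v y)"
          using L1[of "\<lambda>i. row i ?J" y] unfolding transp_eq .
        have "C * norm x powr (r - 1) * norm y \<le> real CARD('m) * norm (transpose ?J *v y)"
          using D L by (meson mult_right_mono norm_ge_zero order_trans)
        then have "(C / real CARD('m)) * norm x powr (r - 1) * norm y \<le> norm (transpose ?J *v y)"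
          by (simp add: field_simps)
        then have "(C / real CARD('m)) * norm x powr (r - 1) * norm y * norm x \<le> norm (transpose ?J *v y) * norm x"
          by (rule mult_right_mono[OF _ norm_ge_zero])
        then have "(C / real CARD('m)) * norm x powr r * norm y \<le> norm (transpose ?J *v y) * norm x"
          by (simp add: pw[symmetric] algebra_simps)
        moreover have "q * norm x powr r * norm y \<le> (C / real CARD('m)) * norm x powr r * norm y"
          by (intro mult_right_mono) (auto simp: q_def)
        ultimately show ?thesis using n1 by linarith
      next
        case False
        then have "\<sigma> * norm x powr r \<le> norm (P x)" by (simp add: horn_def)
        then have "\<sigma> * norm x powr r * norm y \<le> norm (P x) * norm y" by (simp add: mult_right_mono)
        moreover have "q * norm x powr r * norm y \<le> \<sigma> * norm x powr r * norm y"
          by (intro mult_right_mono) (auto simp: q_def)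
        ultimately show ?thesis using n2 by linarith
      qed
    qed
  qed
  then show "\<exists>q \<epsilon>. q > 0 \<and> \<epsilon> > 0 \<and>
            (\<forall>x y. norm x < \<epsilon> \<longrightarrow>
               norm (P x) * norm y + norm (transpose (jacobian P (at x)) *v y) * norm x
                 \<ge> q * norm x powr r * norm y)" using q0 C by blast
next
  assume "\<exists>q \<epsilon>. q > 0 \<and> \<epsilon> > 0 \<and>
            (\<forall>x y. norm x < \<epsilon> \<longrightarrow>
               norm (P x) * norm y + norm (transpose (jacobian P (at x)) *v y) * norm x
                 \<ge> q * norm x powr r * norm y)"
  then obtain q \<epsilon> where q: "q > 0" "\<epsilon> > 0" and
    B: "\<And>x y. norm x < \<epsilon> \<Longrightarrow>
               norm (P x) * norm y + norm (transpose (jacobian P (at x)) *v y) * norm x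
                 \<ge> q * norm x powr r * norm y" by blast
  have "\<forall>x \<in> horn r P (q/2). norm x < \<epsilon> \<longrightarrow>
               Dmin (\<lambda>i. grad_comp P i x) \<ge> (q/2) * norm x powr (r - 1)"
  proof (intro ballI impI)
    fix x assume hx: "x \<in> horn r P (q/2)" and xe: "norm x < \<epsilon>"
    let ?J = "jacobian P (at x)"
    have hP: "norm (P x) < q/2 * norm x powr r" using hx by (simp add: horn_def)
    have "x \<noteq> 0" using hP assms(2) by auto
    then have nx: "norm x > 0" by simp
    have pw: "norm x powr (r - 1) * norm x = norm x powr r"
      using nx by (simp add: powr_diff)
    have "(q/2) * norm x powr (r - 1) \<le> Dmin (\<lambda>i. row i ?J)"
    proof (rule L2)
      fix y :: "real^'m"
      have b: "norm (P x) * norm y + norm (transpose ?J *v y) * norm x \<ge> q * norm x powr r * norm y"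
        using B[OF xe] by blast
      have "norm (P x) * norm y \<le> q/2 * norm x powr r * norm y"
        using hP by (intro mult_right_mono) auto
      with b have "(q/2) * norm x powr r * norm y \<le> norm (transpose ?J *v y) * norm x" by linarith
      then have "((q/2) * norm x powr (r - 1) * norm y) * norm x \<le> norm (transpose ?J *v y) * norm x"
        by (simp add: pw[symmetric] algebra_simps)
      then have "(q/2) * norm x powr (r - 1) * norm y \<le> norm (transpose ?J *v y)"
        using nx by simp
      then show "(q/2) * norm x powr (r - 1) * norm y \<le> norm (\<Sum>i\<in>UNIV. y$i *\<^sub>R row i ?J)"
        unfolding transp_eq[symmetric] .
    next
      show "0 \<le> q/2 * norm x powr (r - 1)" using q by simp
    qed
    then show "Dmin (\<lambda>i. grad_comp P i x) \<ge> (q/2) * norm x powr (r - 1)"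
      by (simp add: grad_comp_def)
  qed
  then show "\<exists>C \<epsilon> \<sigma>. C > 0 \<and> \<epsilon> > 0 \<and> \<sigma> > 0 \<and>
            (\<forall>x \<in> horn r P \<sigma>. norm x < \<epsilon> \<longrightarrow>
               Dmin (\<lambda>i. grad_comp P i x) \<ge> C * norm x powr (r - 1))"
    using q by (intro exI[of _ "q/2"] exI[of _ \<epsilon>] exI[of _ "q/2"]) simp
qed

end
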